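(* Let $G$ be a $\mathbb{Q}$-group. Then for every $m\ge1$ and every $w\in F_m\setminus[F_m,F_m]$, the word map $w\colon G^m\to G$ is surjective.
   Context: A $\mathbb{Q}$-group is a group together with a map $G\times\mathbb{Q}\to G$, $(g,a)\mapsto g^a$, such that for all $g,h\in G$, $a,b\in\mathbb{Q}$: $g^0=e$, $g^1=g$, $e^a=e$; $g^{a+b}=g^ag^b$, $(g^a)^b=g^{ab}$; $(hgh^{-1})^a=hg^ah^{-1}$; and if $gh=hg$ then $(gh)^a=g^ah^a$. $F_m$ is the free group on $x_1,\dots,x_m$, and $w\in F_m$ defines the word map $G^m\to G$ obtained by substituting $x_i\mapsto g_i$. *)

theory Defs
  imports "HOL-Algebra.Algebra"
begin

definition Q_group :: "('g, 'b) monoid_scheme \<Rightarrow> ('g \<Rightarrow> rat \<Rightarrow> 'g) \<Rightarrow> bool" where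
  "Q_group G pw \<longleftrightarrow> group G \<and>
     (\<forall>g\<in>carrier G. \<forall>a. pw g a \<in> carrier G) \<and>
     (\<forall>g\<in>carrier G. pw g 0 = \<one>\<^bsub>G\<^esub>) \<and>
     (\<forall>g\<in>carrier G. pw g 1 = g) \<and>
     (\<forall>a. pw \<one>\<^bsub>G\<^esub> a = \<one>\<^bsub>G\<^esub>) \<and>
     (\<forall>g\<in>carrier G. \<forall>a b. pw g (a + b) = pw g a \<otimes>\<^bsub>G\<^esub> pw g b) \<and>
     (\<forall>g\<in>carrier G. \<forall>a b. pw (pw g a) b = pw g (a * b)) \<and>
     (\<forall>g\<in>carrier G. \<forall>h\<in>carrier G. \<forall>a.
        pw (h \<otimes>\<^bsub>G\<^esub> g \<otimes>\<^bsub>G\<^esub> inv\<^bsub>G\<^esub> h) a = h \<otimes>\<^bsub>G\<^esub> pw g a \<otimes>\<^bsub>G\<^esub> inv\<^bsub>G\<^esub> h) \<and>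
     (\<forall>g\<in>carrier G. \<forall>h\<in>carrier G. \<forall>a.
        g \<otimes>\<^bsub>G\<^esub> h = h \<otimes>\<^bsub>G\<^esub> g \<longrightarrow> pw (g \<otimes>\<^bsub>G\<^esub> h) a = pw g a \<otimes>\<^bsub>G\<^esub> pw h a)"

text \<open>Letters are pairs (i, b): (i, False) stands for x_i and (i, True) for x_i^{-1}.
Group words are lists of letters.\<close>

type_synonym letter = "nat \<times> bool"

definition word_over :: "nat \<Rightarrow> letter list \<Rightarrow> bool" where
  "word_over m w \<longleftrightarrow> (\<forall>l\<in>set w. fst l < m)"

definition free_red :: "(letter list \<times> letter list) set" where
  "free_red = {(xs @ [(i, b), (i, \<not> b)] @ ys, xs @ ys) | xs ys i b. True}"

definition free_equiv :: "(letter list \<times> letter list) set" where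
  "free_equiv = (free_red \<union> free_red\<inverse>)\<^sup>*"

text \<open>The free group on x_1..x_m (indexed 0..m-1): equivalence classes of words over m
letters, with concatenation of representatives as multiplication.\<close>
definition free_group :: "nat \<Rightarrow> letter list set monoid" where
  "free_group m = \<lparr> carrier = (\<lambda>w. free_equiv `` {w}) ` {w. word_over m w},
                    monoid.mult = (\<lambda>A B. free_equiv `` {(SOME a. a \<in> A) @ (SOME b. b \<in> B)}),
                    monoid.one = free_equiv `` {[]} \<rparr>"

fun eval_word :: "('g, 'b) monoid_scheme \<Rightarrow> (nat \<Rightarrow> 'g) \<Rightarrow> letter list \<Rightarrow> 'g" where
  "eval_word G g [] = \<one>\<^bsub>G\<^esub>"
| "eval_word G g ((i, b) # w) =
     (if b then inv\<^bsub>G\<^esub> (g i) else g i) \<otimes>\<^bsub>G\<^esub> eval_word G g w"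

definition word_map :: "('g, 'b) monoid_scheme \<Rightarrow> nat \<Rightarrow> letter list set \<Rightarrow> (nat \<Rightarrow> 'g) \<Rightarrow> 'g" where
  "word_map G m W g = eval_word G g (SOME w. w \<in> W \<and> word_over m w)"

end

theory Submission
  imports Defs
begin

fun es :: "nat \<Rightarrow> letter list \<Rightarrow> int" where
  "es i [] = 0"
| "es i ((j, b) # w) = (if j = i then (if b then -1 else 1) else 0) + es i w"

lemma es_append: "es i (u @ v) = es i u + es i v"
  by (induction u rule: es.induct) auto

lemma es_red: "(u, v) \<in> free_red \<Longrightarrow> es i u = es i v"
  unfolding free_red_def by (auto simp: es_append)

lemma es_equiv: "(u, v) \<in> free_equiv \<Longrightarrow> es i u = es i v"
  unfolding free_equiv_def
proof (induction rule: rtrancl_induct)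
  case base then show ?case by simp
next
  case (step y z) then show ?case using es_red[of y z i] es_red[of z y i] by auto
qed

lemma equiv_free: "equiv UNIV free_equiv"
  unfolding free_equiv_def
  by (intro equivI refl_rtrancl trans_rtrancl sym_rtrancl) (auto simp: sym_def)

definition cls :: "letter list \<Rightarrow> letter list set" where
  "cls w = free_equiv `` {w}"

lemma in_cls: "w \<in> cls w"
  unfolding cls_def free_equiv_def by simp

lemma cls_eq: "(u, v) \<in> free_equiv \<Longrightarrow> cls u = cls v"
  unfolding cls_def using equiv_free by (simp add: equiv_class_eq)

lemma some_cls: "(u, SOME a. a \<in> cls u) \<in> free_equiv"
proof -
  have "(SOME a. a \<in> cls u) \<in> cls u" using in_cls by (rule someI)
  then show ?thesis unfolding cls_def by simp
qed

lemma red_cong: "(u, v) \<in> free_red \<Longrightarrow> (xs @ u @ ys, xs @ v @ ys) \<in> free_red"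
  unfolding free_red_def by auto (metis append.assoc)

lemma equiv_cong: "(u, v) \<in> free_equiv \<Longrightarrow> (xs @ u @ ys, xs @ v @ ys) \<in> free_equiv"
  unfolding free_equiv_def
proof (induction rule: rtrancl_induct)
  case base then show ?case by simp
next
  case (step y z)
  then have "(xs @ y @ ys, xs @ z @ ys) \<in> free_red \<union> free_red\<inverse>"
    using red_cong[of y z xs ys] red_cong[of z y xs ys] by auto
  with step show ?case by (meson rtrancl.rtrancl_into_rtrancl)
qed

lemma mult_cls: "cls u \<otimes>\<^bsub>free_group m\<^esub> cls v = cls (u @ v)"
proof -
  let ?a = "SOME a. a \<in> cls u" and ?b = "SOME b. b \<in> cls v"
  have 1: "(u, ?a) \<in> free_equiv" "(v, ?b) \<in> free_equiv" by (rule some_cls)+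
  have "(u @ v, ?a @ v) \<in> free_equiv" using equiv_cong[OF 1(1), of "[]" v] by simp
  moreover have "(?a @ v, ?a @ ?b) \<in> free_equiv" using equiv_cong[OF 1(2), of ?a "[]"] by simp
  ultimately have "(u @ v, ?a @ ?b) \<in> free_equiv"
    using equiv_free unfolding equiv_def trans_def by blast
  then show ?thesis unfolding free_group_def using cls_eq[of "u @ v"]
    by (simp add: cls_def)
qed

lemma one_cls: "\<one>\<^bsub>free_group m\<^esub> = cls []"
  unfolding free_group_def cls_def by simp

lemma carrier_fg: "carrier (free_group m) = cls ` {w. word_over m w}"
  unfolding free_group_def cls_def by simp

definition winv :: "letter list \<Rightarrow> letter list" where
  "winv u = rev (map (\<lambda>(i, b). (i, \<not> b)) u)"

lemma winv_equiv: "(winv u @ u, []) \<in> free_equiv"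
proof (induction u)
  case Nil then show ?case by (simp add: winv_def free_equiv_def)
next
  case (Cons l u)
  obtain i b where l: "l = (i, b)" by fastforce
  have "(winv u @ [(i, \<not> b), (i, \<not> \<not> b)] @ u, winv u @ u) \<in> free_red"
    unfolding free_red_def by blast
  then have "(winv (l # u) @ l # u, winv u @ u) \<in> free_equiv"
    unfolding free_equiv_def l winv_def by auto
  with Cons show ?case using equiv_free unfolding equiv_def trans_def by blast
qed

lemma word_over_append: "word_over m (u @ v) = (word_over m u \<and> word_over m v)"
  unfolding word_over_def by auto

lemma word_over_winv: "word_over m u \<Longrightarrow> word_over m (winv u)"
  unfolding word_over_def winv_def by auto

lemma group_fg: "group (free_group m)"
proof (rule groupI)
  fix x y assume "x \<in> carrier (free_group m)" "y \<in> carrier (free_group m)"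
  then show "x \<otimes>\<^bsub>free_group m\<^esub> y \<in> carrier (free_group m)"
    unfolding carrier_fg by (auto simp: mult_cls word_over_append)
next
  show "\<one>\<^bsub>free_group m\<^esub> \<in> carrier (free_group m)"
    unfolding carrier_fg one_cls by (auto simp: word_over_def)
next
  fix x y z assume "x \<in> carrier (free_group m)" "y \<in> carrier (free_group m)" "z \<in> carrier (free_group m)"
  then show "x \<otimes>\<^bsub>free_group m\<^esub> y \<otimes>\<^bsub>free_group m\<^esub> z = x \<otimes>\<^bsub>free_group m\<^esub> (y \<otimes>\<^bsub>free_group m\<^esub> z)"
    unfolding carrier_fg by (auto simp: mult_cls)
next
  fix x assume "x \<in> carrier (free_group m)"
  then show "\<one>\<^bsub>free_group m\<^esub> \<otimes>\<^bsub>free_group m\<^esub> x = x"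
    unfolding carrier_fg by (auto simp: mult_cls one_cls)
next
  fix x assume "x \<in> carrier (free_group m)"
  then obtain u where u: "word_over m u" "x = cls u" unfolding carrier_fg by auto
  have "cls (winv u) \<in> carrier (free_group m)" unfolding carrier_fg using u word_over_winv by auto
  moreover have "cls (winv u) \<otimes>\<^bsub>free_group m\<^esub> x = \<one>\<^bsub>free_group m\<^esub>"
    using u by (simp add: mult_cls one_cls cls_eq[OF winv_equiv])
  ultimately show "\<exists>y\<in>carrier (free_group m). y \<otimes>\<^bsub>free_group m\<^esub> x = \<one>\<^bsub>free_group m\<^esub>" by blast
qed

definition ces :: "nat \<Rightarrow> letter list set \<Rightarrow> int" where
  "ces i A = es i (SOME a. a \<in> A)"

lemma ces_cls: "ces i (cls u) = es i u"
  unfolding ces_def using es_equiv[OF some_cls[of u]] by simp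

lemma ces_mult:
  assumes "x \<in> carrier (free_group m)" "y \<in> carrier (free_group m)"
  shows "ces i (x \<otimes>\<^bsub>free_group m\<^esub> y) = ces i x + ces i y"
  using assms unfolding carrier_fg by (auto simp: mult_cls ces_cls es_append)

lemma ces_one: "ces i \<one>\<^bsub>free_group m\<^esub> = 0"
  by (simp add: one_cls ces_cls)

lemma ces_inv:
  assumes "x \<in> carrier (free_group m)"
  shows "ces i (inv\<^bsub>free_group m\<^esub> x) = - ces i x"
proof -
  interpret group "free_group m" by (rule group_fg)
  have "ces i (x \<otimes>\<^bsub>free_group m\<^esub> inv\<^bsub>free_group m\<^esub> x) = 0" using assms by (simp add: ces_one)
  then show ?thesis using ces_mult[OF assms inv_closed[OF assms]] by simp
qed

lemma derived_ces:
  assumes "x \<in> derived (free_group m) (carrier (free_group m))"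
  shows "ces i x = 0 \<and> x \<in> carrier (free_group m)"
  using assms unfolding derived_def
proof (induction rule: generate.induct)
  interpret group "free_group m" by (rule group_fg)
  case one then show ?case by (simp add: ces_one)
next
  interpret group "free_group m" by (rule group_fg)
  case (incl h) then show ?case by (auto simp: ces_mult ces_inv)
next
  interpret group "free_group m" by (rule group_fg)
  case (inv h)
  then have "ces i h = 0 \<and> h \<in> carrier (free_group m)" by (auto simp: ces_mult ces_inv)
  then show ?case by (simp add: ces_inv)
next
  interpret group "free_group m" by (rule group_fg)
  case (eng h1 h2) then show ?case by (simp add: ces_mult)
qed

abbreviation DD :: "nat \<Rightarrow> letter list set set" where
  "DD m \<equiv> generate (free_group m) (derived_set (free_group m) (carrier (free_group m)))"

lemma (in group) comm_step:
  assumes "p \<in> generate G (derived_set G (carrier G))" "h1 \<in> carrier G" "h2 \<in> carrier G"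
  shows "p \<otimes> (h1 \<otimes> h2 \<otimes> inv h1 \<otimes> inv h2) \<in> generate G (derived_set G (carrier G))"
  using assms by (blast intro: generate.eng generate.incl)

lemma (in group) cancel1: "x \<in> carrier G \<Longrightarrow> y \<in> carrier G \<Longrightarrow> x \<otimes> (inv x \<otimes> y) = y"
  by (simp flip: m_assoc)

lemma (in group) cancel2: "x \<in> carrier G \<Longrightarrow> y \<in> carrier G \<Longrightarrow> inv x \<otimes> (x \<otimes> y) = y"
  by (simp flip: m_assoc)

lemma (in group) rot:
  assumes "u \<in> carrier G" "v \<in> carrier G" "u \<otimes> v \<in> generate G (derived_set G (carrier G))"
  shows "v \<otimes> u \<in> generate G (derived_set G (carrier G))"
proof -
  have "v \<otimes> u = (u \<otimes> v) \<otimes> (inv v \<otimes> inv u \<otimes> inv (inv v) \<otimes> inv (inv u))"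
    using assms by (simp add: m_assoc cancel1)
  then show ?thesis using comm_step[OF assms(3), of "inv v" "inv u"] assms by simp
qed

lemma (in group) swp:
  assumes "x \<in> carrier G" "y \<in> carrier G" "z \<in> carrier G"
    "x \<otimes> y \<otimes> z \<in> generate G (derived_set G (carrier G))"
  shows "x \<otimes> z \<otimes> y \<in> generate G (derived_set G (carrier G))"
proof -
  have "x \<otimes> z \<otimes> y = (x \<otimes> y \<otimes> z) \<otimes> (inv z \<otimes> inv y \<otimes> inv (inv z) \<otimes> inv (inv y))"
    using assms by (simp add: m_assoc cancel1)
  then show ?thesis using comm_step[OF assms(4), of "inv z" "inv y"] assms by simp
qed

lemma cls_carrier: "word_over m u \<Longrightarrow> cls u \<in> carrier (free_group m)"
  unfolding carrier_fg by auto

lemma rotw: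
  assumes "word_over m u" "word_over m v" "cls (u @ v) \<in> DD m"
  shows "cls (v @ u) \<in> DD m"
  using group.rot[OF group_fg cls_carrier[OF assms(1)] cls_carrier[OF assms(2)]] assms(3)
  by (simp add: mult_cls)

lemma swpw:
  assumes "word_over m x" "word_over m y" "word_over m z" "cls (x @ y @ z) \<in> DD m"
  shows "cls (x @ z @ y) \<in> DD m"
  using group.swp[OF group_fg cls_carrier[OF assms(1)] cls_carrier[OF assms(2)] cls_carrier[OF assms(3)]] assms(4)
  by (simp add: mult_cls)

lemma es_nonpos: "(i, False) \<notin> set w \<Longrightarrow> es i w \<le> 0"
  by (induction w rule: es.induct) auto

lemma es_nonneg: "(i, True) \<notin> set w \<Longrightarrow> es i w \<ge> 0"
  by (induction w rule: es.induct) auto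

lemma zero_es_in_D:
  "word_over m w \<Longrightarrow> (\<forall>i. es i w = 0) \<Longrightarrow> cls w \<in> DD m"
proof (induction "length w" arbitrary: w rule: less_induct)
  case less
  show ?case
  proof (cases w)
    case Nil
    then show ?thesis using generate.one[of "free_group m"] by (simp add: one_cls)
  next
    case (Cons l rest)
    obtain i b where l: "l = (i, b)" by fastforce
    have "es i w = (if b then -1 else 1) + es i rest" using Cons l by simp
    then have "es i rest = (if b then 1 else -1)" using less.prems(2) by (cases b) auto
    then have "(i, \<not> b) \<in> set rest" using es_nonpos[of i rest] es_nonneg[of i rest]
      by (cases b) auto
    then obtain u v where uv: "rest = u @ (i, \<not> b) # v" by (meson split_list)
    have wo: "word_over m u" "word_over m v" "word_over m [l]" "word_over m [(i, \<not> b)]"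
      using less.prems(1) Cons uv l by (auto simp: word_over_def)
    have "es j (u @ v) = 0" for j
    proof -
      have "es j w = es j [l] + es j u + es j [(i, \<not> b)] + es j v"
      proof -
        have "w = [l] @ u @ [(i, \<not> b)] @ v" using Cons uv by simp
        then show ?thesis by (simp only: es_append add.assoc)
      qed
      moreover have "es j [l] + es j [(i, \<not> b)] = 0" using l by (cases b) auto
      ultimately show ?thesis using less.prems(2) by (simp add: es_append)
    qed
    moreover have "length (u @ v) < length w" using Cons uv by simp
    ultimately have "cls (u @ v) \<in> DD m" using less wo by (simp add: word_over_append)
    then have "cls (v @ u) \<in> DD m" using rotw wo by blast
    moreover have "cls (v @ [l] @ [(i, \<not> b)] @ u) = cls (v @ u)"
    proof (rule cls_eq)
      have "(v @ [(i, b), (i, \<not> b)] @ u, v @ u) \<in> free_red" unfolding free_red_def by blast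
      then show "(v @ [l] @ [(i, \<not> b)] @ u, v @ u) \<in> free_equiv" unfolding free_equiv_def l by auto
    qed
    ultimately have "cls ((v @ [l]) @ [(i, \<not> b)] @ u) \<in> DD m" by simp
    then have "cls ((v @ [l]) @ u @ [(i, \<not> b)]) \<in> DD m"
      using swpw[of m "v @ [l]" "[(i, \<not> b)]" u] wo by (simp only: word_over_append simp_thms)
    then have "cls (v @ ([l] @ u @ [(i, \<not> b)])) \<in> DD m" by simp
    then have "cls (([l] @ u @ [(i, \<not> b)]) @ v) \<in> DD m"
      using rotw wo by (meson word_over_append)
    then show ?thesis using Cons uv by simp
  qed
qed

lemma eval_pw:
  assumes Q: "Q_group G pw" and x: "x \<in> carrier G"
  shows "eval_word G (\<lambda>j. if j = i then x else \<one>\<^bsub>G\<^esub>) w = pw x (of_int (es i w))"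
proof (induction w)
  have grp: "group G" using Q unfolding Q_group_def by blast
  case Nil
  show ?case using Q x unfolding Q_group_def by simp
next
  case (Cons a w)
  have grp: "group G" using Q unfolding Q_group_def by blast
  have cl: "\<And>a. pw x a \<in> carrier G" using Q x unfolding Q_group_def by blast
  have add: "\<And>a b. pw x (a + b) = pw x a \<otimes>\<^bsub>G\<^esub> pw x b" using Q x unfolding Q_group_def by blast
  have p0: "pw x 0 = \<one>\<^bsub>G\<^esub>" and p1: "pw x 1 = x" using Q x unfolding Q_group_def by blast+
  have pinv: "inv\<^bsub>G\<^esub> x = pw x (-1)"
  proof (rule group.inv_equality[OF grp])
    show "pw x (-1) \<otimes>\<^bsub>G\<^esub> x = \<one>\<^bsub>G\<^esub>" using add[of "-1" 1] p0 p1 by simp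
  qed (use x cl in auto)
  obtain j b where a: "a = (j, b)" by fastforce
  show ?case
  proof (cases "j = i")
    case True
    show ?thesis
    proof (cases b)
      case True
      then show ?thesis using Cons a pinv \<open>j = i\<close> add[of "-1" "of_int (es i w)"] by simp
    next
      case False
      then show ?thesis using Cons a p1 \<open>j = i\<close> add[of 1 "of_int (es i w)"] by simp
    qed
  next
    case False
    then show ?thesis using Cons a cl monoid.l_one[OF group.is_monoid[OF grp]] monoid.inv_one[OF group.is_monoid[OF grp]] by simp
  qed
qed

theorem lemma5p1:
  fixes G :: "('g, 'b) monoid_scheme" and pw :: "'g \<Rightarrow> rat \<Rightarrow> 'g"
    and m :: nat and W :: "letter list set"
  assumes "Q_group G pw"
    and "m \<ge> 1"
    and "W \<in> carrier (free_group m) - derived (free_group m) (carrier (free_group m))"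
  shows "\<forall>h\<in>carrier G. \<exists>g. (\<forall>i<m. g i \<in> carrier G) \<and> word_map G m W g = h"
proof
  fix h assume h: "h \<in> carrier G"
  have grp: "group G" using assms(1) unfolding Q_group_def by blast
  have cl: "\<And>y a. y \<in> carrier G \<Longrightarrow> pw y a \<in> carrier G" using assms(1) unfolding Q_group_def by blast
  have pm: "\<And>y a b. y \<in> carrier G \<Longrightarrow> pw (pw y a) b = pw y (a * b)" using assms(1) unfolding Q_group_def by blast
  have p1: "\<And>y. y \<in> carrier G \<Longrightarrow> pw y 1 = y" using assms(1) unfolding Q_group_def by blast
  obtain w0 where w0: "word_over m w0" "W = cls w0" using assms(3) unfolding carrier_fg by auto
  define w where "w = (SOME w. w \<in> W \<and> word_over m w)"
  have hw: "w \<in> W \<and> word_over m w" unfolding w_def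
    by (rule someI[of _ w0]) (use w0 in_cls in auto)
  then have "(w0, w) \<in> free_equiv" using w0 unfolding cls_def by simp
  then have Ww: "W = cls w" using cls_eq w0 by simp
  have "\<not> (\<forall>i. es i w = 0)"
    using zero_es_in_D[of m w] hw assms(3) Ww unfolding derived_def by auto
  then obtain i where e: "es i w \<noteq> 0" by blast
  define x where "x = pw h (1 / of_int (es i w))"
  have x: "x \<in> carrier G" unfolding x_def using cl h by blast
  define g where "g = (\<lambda>j. if j = i then x else \<one>\<^bsub>G\<^esub>)"
  have "word_map G m W g = eval_word G g w" unfolding word_map_def w_def by simp
  also have "\<dots> = pw x (of_int (es i w))" unfolding g_def by (rule eval_pw[OF assms(1) x])
  also have "\<dots> = h" unfolding x_def using pm[OF h] p1[OF h] e by simp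
  finally have "word_map G m W g = h" .
  moreover have "\<forall>j<m. g j \<in> carrier G" unfolding g_def using x monoid.one_closed[OF group.is_monoid[OF grp]] by auto
  ultimately show "\<exists>g. (\<forall>i<m. g i \<in> carrier G) \<and> word_map G m W g = h" by blast
qed

end
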